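(* Let $(X,\mathcal{B})$ be a $t$-$(v,k,\lambda)$ design with $b$ blocks. Then there is a way to write each block $B\in\mathcal{B}$ as an ordered $k$-tuple of its elements such that every point $x\in X$ occurs in each of the $k$ positions in exactly $b/v$ of the ordered blocks if and only if $v$ divides $b$ (equivalently, $k$ divides the number $r=bk/v$ of blocks containing a given point).
   Context: A $t$-$(v,k,\lambda)$ design ($t\ge1$, $t\le k\le v$) is a pair $(X,\mathcal{B})$ where $X$ is a set of $v$ points and $\mathcal{B}$ is a collection of distinct $k$-subsets of $X$ (blocks) such that every $t$-subset of $X$ is contained in exactly $\lambda$ blocks; $b=|\mathcal{B}|$. Every point lies in the same number $r$ of blocks, and $bk=vr$. *)

theory Defs
  imports Complex_Main
begin

definition t_design :: "'a set \<Rightarrow> 'a set set \<Rightarrow> nat \<Rightarrow> nat \<Rightarrow> nat \<Rightarrow> nat \<Rightarrow> bool" where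
  "t_design X \<B> t v k lam \<longleftrightarrow>
     finite X \<and> card X = v \<and> 1 \<le> t \<and> t \<le> k \<and> k \<le> v \<and>
     (\<forall>B\<in>\<B>. B \<subseteq> X \<and> card B = k) \<and>
     (\<forall>T. T \<subseteq> X \<longrightarrow> card T = t \<longrightarrow> card {B\<in>\<B>. T \<subseteq> B} = lam)"

definition balanced_ordering :: "'a set \<Rightarrow> 'a set set \<Rightarrow> nat \<Rightarrow> ('a set \<Rightarrow> 'a list) \<Rightarrow> bool" where
  "balanced_ordering X \<B> k ord \<longleftrightarrow>
     (\<forall>B\<in>\<B>. distinct (ord B) \<and> set (ord B) = B \<and> length (ord B) = k) \<and>
     (\<forall>x\<in>X. \<forall>i<k. real (card {B\<in>\<B>. ord B ! i = x}) = real (card \<B>) / real (card X))"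

end

theory Submission
  imports Defs
begin

lemma card_filter_sum: "finite C \<Longrightarrow> card {c\<in>C. P c} = (\<Sum>c\<in>C. if P c then 1 else 0::nat)"
  by (simp add: sum.If_cases Int_def)

lemma swap_count:
  assumes "finite A" "finite C"
  shows "(\<Sum>a\<in>A. card {c\<in>C. P a c}) = (\<Sum>c\<in>C. card {a\<in>A. P a c})"
  using assms by (simp add: card_filter_sum sum.swap[of _ A C])

definition cnt :: "'j set \<Rightarrow> ('j \<Rightarrow> 'a) \<Rightarrow> 'a \<Rightarrow> nat" where
  "cnt J c w = card {j\<in>J. c j = w}"

definition E :: "'j set \<Rightarrow> ('j \<Rightarrow> 'a set) \<Rightarrow> ('j \<Rightarrow> 'a) \<Rightarrow> 'a \<Rightarrow> 'a \<Rightarrow> bool" where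
  "E J S c y z \<longleftrightarrow> (\<exists>j\<in>J. c j = y \<and> z \<in> S j)"

lemma move:
  assumes "finite J" "j1 \<in> J" "c j1 = a" "b \<noteq> a"
  shows "cnt J (c(j1:=b)) a + 1 = cnt J c a"
    and "cnt J (c(j1:=b)) b = cnt J c b + 1"
    and "w \<noteq> a \<Longrightarrow> w \<noteq> b \<Longrightarrow> cnt J (c(j1:=b)) w = cnt J c w"
proof -
  have "{j\<in>J. (c(j1:=b)) j = a} = {j\<in>J. c j = a} - {j1}" using assms by auto
  moreover have "j1 \<in> {j\<in>J. c j = a}" using assms by auto
  moreover have "finite {j\<in>J. c j = a}" using assms by auto
  ultimately show "cnt J (c(j1:=b)) a + 1 = cnt J c a" unfolding cnt_def
    by (metis (no_types, lifting) Suc_eq_plus1 card.remove)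
next
  have "{j\<in>J. (c(j1:=b)) j = b} = insert j1 {j\<in>J. c j = b}" using assms by auto
  moreover have "j1 \<notin> {j\<in>J. c j = b}" using assms by auto
  moreover have "finite {j\<in>J. c j = b}" using assms by auto
  ultimately show "cnt J (c(j1:=b)) b = cnt J c b + 1" unfolding cnt_def by simp
next
  assume "w \<noteq> a" "w \<noteq> b"
  then have "{j\<in>J. (c(j1:=b)) j = w} = {j\<in>J. c j = w}" using assms by auto
  then show "cnt J (c(j1:=b)) w = cnt J c w" unfolding cnt_def by simp
qed

lemma transfer:
  fixes R R' :: "'a \<Rightarrow> 'a \<Rightarrow> bool"
  shows "(R ^^ m) u z \<Longrightarrow> (\<forall>i\<le>m. \<not> (R ^^ i) a z) \<Longrightarrow> (\<forall>u v. R u v \<longrightarrow> u \<noteq> a \<longrightarrow> R' u v) \<Longrightarrow> (R' ^^ m) u z"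
proof (induction m arbitrary: u)
  case 0
  from 0(1) have "u = z" by (rule relpowp_0_E)
  then show ?case using relpowp_0_I[of R' z] by simp
next
  case (Suc m)
  from Suc.prems(1) obtain w where w: "R u w" "(R ^^ m) w z" using relpowp_Suc_D2 by metis
  have "u \<noteq> a" using Suc.prems(1,2) by blast
  then have "R' u w" using w Suc.prems(3) by blast
  moreover have "(R' ^^ m) w z" using Suc.IH[OF w(2)] Suc.prems(2,3) by simp
  ultimately show ?case by (rule relpowp_Suc_I2)
qed

lemma shift:
  assumes fin: "finite J"
  shows "(E J S c ^^ n) y0 z \<Longrightarrow> y0 \<noteq> z \<Longrightarrow> (\<forall>j\<in>J. c j \<in> S j) \<Longrightarrow>
    \<exists>c'. (\<forall>j\<in>J. c' j \<in> S j) \<and> cnt J c' y0 + 1 = cnt J c y0 \<and> cnt J c' z = cnt J c z + 1 \<and>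
         (\<forall>w. w \<noteq> y0 \<longrightarrow> w \<noteq> z \<longrightarrow> cnt J c' w = cnt J c w)"
proof (induction n arbitrary: c y0 rule: less_induct)
  case (less n c y0)
  show ?case
  proof (cases "\<exists>i<n. (E J S c ^^ i) y0 z")
    case True
    then obtain i where "i < n" "(E J S c ^^ i) y0 z" by blast
    then show ?thesis using less by blast
  next
    case False
    have "n \<noteq> 0" using less.prems by (cases n) auto
    then obtain n' where n': "n = Suc n'" by (cases n) auto
    from less.prems(1) n' obtain y1 where y1: "E J S c y0 y1" "(E J S c ^^ n') y1 z"
      using relpowp_Suc_D2 by metis
    from y1(1) obtain j1 where j1: "j1 \<in> J" "c j1 = y0" "y1 \<in> S j1" unfolding E_def by blast
    have "y1 \<noteq> y0" using False y1(2) n' by blast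
    define c1 where "c1 = c(j1 := y1)"
    have v1: "\<forall>j\<in>J. c1 j \<in> S j" using less.prems(3) j1 unfolding c1_def by auto
    note mv = move[of J j1 c y0 y1, OF fin j1(1) j1(2) \<open>y1 \<noteq> y0\<close>, folded c1_def]
    show ?thesis
    proof (cases "y1 = z")
      case True
      then show ?thesis using v1 mv by blast
    next
      case False2: False
      have "(E J S c1 ^^ n') y1 z"
      proof (rule transfer[OF y1(2)])
        show "\<forall>i\<le>n'. \<not> (E J S c ^^ i) y0 z" using False n' by auto
        show "\<forall>u v. E J S c u v \<longrightarrow> u \<noteq> y0 \<longrightarrow> E J S c1 u v"
          unfolding E_def c1_def using j1 by auto
      qed
      with less.IH[of n' c1 y1] n' False2 v1 obtain c' where c':
        "\<forall>j\<in>J. c' j \<in> S j" "cnt J c' y1 + 1 = cnt J c1 y1" "cnt J c' z = cnt J c1 z + 1"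
        "\<forall>w. w \<noteq> y1 \<longrightarrow> w \<noteq> z \<longrightarrow> cnt J c' w = cnt J c1 w" by blast
      have "cnt J c' y0 + 1 = cnt J c y0" using c'(4) mv(1) \<open>y1 \<noteq> y0\<close> less.prems(2) by metis
      moreover have "cnt J c' z = cnt J c z + 1" using c'(3) mv(3)[of z] False2 less.prems(2) by simp
      moreover have "\<forall>w. w \<noteq> y0 \<longrightarrow> w \<noteq> z \<longrightarrow> cnt J c' w = cnt J c w"
      proof (intro allI impI)
        fix w assume "w \<noteq> y0" "w \<noteq> z"
        then show "cnt J c' w = cnt J c w"
          using c'(2,4) mv(2,3) by (cases "w = y1") auto
      qed
      ultimately show ?thesis using c'(1) by blast
    qed
  qed
qed

lemma sum_cnt:
  assumes "finite J" "finite R" "\<forall>j\<in>J. c j \<in> R"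
  shows "(\<Sum>y\<in>R. cnt J c y) = card J"
proof -
  have "(\<Sum>y\<in>R. cnt J c y) = (\<Sum>y\<in>R. card {j\<in>J. c j = y})" unfolding cnt_def by simp
  also have "\<dots> = (\<Sum>j\<in>J. card {y\<in>R. c j = y})" using swap_count[OF assms(1,2), of "\<lambda>j y. c j = y"] by simp
  also have "\<dots> = (\<Sum>j\<in>J. 1)"
  proof (rule sum.cong)
    fix j assume "j \<in> J"
    then have "{y\<in>R. c j = y} = {c j}" using assms(3) by auto
    then show "card {y\<in>R. c j = y} = 1" by simp
  qed simp
  finally show ?thesis by simp
qed

lemma matching:
  assumes finJ: "finite J" and finX: "finite X"
    and SX: "\<forall>j\<in>J. S j \<subseteq> X \<and> card (S j) = k" and kpos: "0 < k"
    and reg: "\<forall>x\<in>X. card {j\<in>J. x \<in> S j} = m * k"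
  shows "\<exists>c. (\<forall>j\<in>J. c j \<in> S j) \<and> (\<forall>x\<in>X. cnt J c x = m)"
proof -
  define valid where "valid c \<longleftrightarrow> (\<forall>j\<in>J. c j \<in> S j)" for c
  define \<Phi> where "\<Phi> c = (\<Sum>x\<in>X. cnt J c x - m)" for c
  have "valid (\<lambda>j. SOME x. x \<in> S j)"
    unfolding valid_def
  proof
    fix j assume "j \<in> J"
    then have "S j \<noteq> {}" using SX kpos by fastforce
    then show "(SOME x. x \<in> S j) \<in> S j" by (simp add: some_in_eq)
  qed
  then obtain c where vc: "valid c" and cmin: "\<forall>c'. valid c' \<longrightarrow> \<Phi> c \<le> \<Phi> c'"
    using ex_has_least_nat[of valid _ \<Phi>] by blast
  have cX: "\<forall>j\<in>J. c j \<in> X" using vc SX unfolding valid_def by blast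
  have sumc: "(\<Sum>y\<in>X. cnt J c y) = card J" using sum_cnt[OF finJ finX cX] .
  have "card J * k = (\<Sum>j\<in>J. card {y\<in>X. y \<in> S j})"
  proof -
    have "\<forall>j\<in>J. {y\<in>X. y \<in> S j} = S j" using SX by blast
    then have "(\<Sum>j\<in>J. card {y\<in>X. y \<in> S j}) = (\<Sum>j\<in>J. k)" using SX by simp
    then show ?thesis by simp
  qed
  also have "\<dots> = (\<Sum>y\<in>X. card {j\<in>J. y \<in> S j})" using swap_count[OF finJ finX] by simp
  also have "\<dots> = card X * m * k" using reg by simp
  finally have cardJ: "card J = card X * m" using kpos by simp
  have le: "\<forall>x\<in>X. cnt J c x \<le> m"
  proof (rule ccontr)
    assume "\<not> (\<forall>x\<in>X. cnt J c x \<le> m)"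
    then obtain x where xX: "x \<in> X" and xbig: "cnt J c x > m" by auto
    define R where "R = {y. (E J S c)\<^sup>*\<^sup>* x y}"
    have RX: "R \<subseteq> X"
    proof
      fix y assume "y \<in> R"
      then have "(E J S c)\<^sup>*\<^sup>* x y" unfolding R_def by simp
      then show "y \<in> X"
      proof (induction rule: rtranclp_induct)
        case base then show ?case using xX .
      next
        case (step y z) then show ?case using SX unfolding E_def by blast
      qed
    qed
    have finR: "finite R" using RX finX finite_subset by blast
    have xR: "x \<in> R" unfolding R_def by simp
    show False
    proof (cases "\<exists>z\<in>R. cnt J c z < m")
      case True
      then obtain z where zR: "z \<in> R" and zs: "cnt J c z < m" by blast
      have "x \<noteq> z" using zs xbig by auto
      from zR obtain n where "(E J S c ^^ n) x z" unfolding R_def using rtranclp_imp_relpowp by fastforce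
      from shift[OF finJ this \<open>x \<noteq> z\<close>] vc obtain c' where c':
        "valid c'" "cnt J c' x + 1 = cnt J c x" "cnt J c' z = cnt J c z + 1"
        "\<forall>w. w \<noteq> x \<longrightarrow> w \<noteq> z \<longrightarrow> cnt J c' w = cnt J c w" unfolding valid_def by blast
      have "\<Phi> c' < \<Phi> c" unfolding \<Phi>_def
      proof (rule sum_strict_mono_ex1[OF finX])
        show "\<forall>w\<in>X. cnt J c' w - m \<le> cnt J c w - m"
        proof
          fix w assume "w \<in> X"
          show "cnt J c' w - m \<le> cnt J c w - m"
            using c'(2,3,4) zs by (cases "w = x"; cases "w = z") auto
        qed
        show "\<exists>w\<in>X. cnt J c' w - m < cnt J c w - m" using xX c'(2) xbig by (intro bexI[of _ x]) auto
      qed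
      then show False using cmin c'(1) by (simp add: not_le[symmetric])
    next
      case False
      define JR where "JR = {j\<in>J. c j \<in> R}"
      have finJR: "finite JR" using finJ unfolding JR_def by simp
      have "card JR = (\<Sum>y\<in>R. cnt J c y)"
      proof -
        have "(\<Sum>y\<in>R. cnt J c y) = (\<Sum>y\<in>R. cnt JR c y)"
          unfolding cnt_def JR_def by (intro sum.cong) (auto intro!: arg_cong[where f=card])
        also have "\<dots> = card JR" by (rule sum_cnt[OF finJR finR]) (auto simp: JR_def)
        finally show ?thesis by simp
      qed
      also have "\<dots> > (\<Sum>y\<in>R. m)"
        using False xR xbig by (intro sum_strict_mono_ex1[OF finR]) (auto simp: not_less)
      finally have big: "card JR > m * card R" by (simp add: mult.commute)
      have SR: "\<forall>j\<in>JR. S j \<subseteq> R"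
      proof
        fix j assume jJR: "j \<in> JR"
        show "S j \<subseteq> R"
        proof
          fix z assume "z \<in> S j"
          then have "E J S c (c j) z" using jJR unfolding E_def JR_def by blast
          moreover have "(E J S c)\<^sup>*\<^sup>* x (c j)" using jJR unfolding JR_def R_def by simp
          ultimately show "z \<in> R" unfolding R_def by simp
        qed
      qed
      have "k * card JR = (\<Sum>j\<in>JR. card {y\<in>R. y \<in> S j})"
      proof -
        have "\<forall>j\<in>JR. {y\<in>R. y \<in> S j} = S j" using SR by blast
        moreover have "\<forall>j\<in>JR. card (S j) = k" using SX unfolding JR_def by simp
        ultimately show ?thesis by simp
      qed
      also have "\<dots> \<le> (\<Sum>j\<in>J. card {y\<in>R. y \<in> S j})"
        by (rule sum_mono2[OF finJ]) (auto simp: JR_def)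
      also have "\<dots> = (\<Sum>y\<in>R. card {j\<in>J. y \<in> S j})" using swap_count[OF finJ finR] by simp
      also have "\<dots> = card R * m * k" using reg RX by (simp add: subset_iff)
      finally have "card JR \<le> m * card R" using kpos by (simp add: mult.commute mult.left_commute)
      then show False using big by simp
    qed
  qed
  have "\<forall>x\<in>X. cnt J c x = m"
  proof (rule ccontr)
    assume "\<not> (\<forall>x\<in>X. cnt J c x = m)"
    then obtain x where "x \<in> X" "cnt J c x < m" using le by (auto simp: nat_less_le)
    then have "(\<Sum>y\<in>X. cnt J c y) < (\<Sum>y\<in>X. m)"
      using le by (intro sum_strict_mono_ex1[OF finX]) auto
    then show False using sumc cardJ by (simp add: mult.commute)
  qed
  then show ?thesis using vc unfolding valid_def by blast
qed

lemma order_ex: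
  "finite J \<Longrightarrow> finite X \<Longrightarrow> \<forall>j\<in>J. S j \<subseteq> X \<and> card (S j) = k \<Longrightarrow>
   \<forall>x\<in>X. card {j\<in>J. x \<in> S j} = m * k \<Longrightarrow>
   \<exists>f. (\<forall>j\<in>J. distinct (f j) \<and> set (f j) = S j \<and> length (f j) = k) \<and>
       (\<forall>x\<in>X. \<forall>i<k. card {j\<in>J. f j ! i = x} = m)"
proof (induction k arbitrary: S)
  case 0
  have "\<forall>j\<in>J. S j = {}" using 0 by (metis card_0_eq finite_subset)
  then show ?case by (intro exI[of _ "\<lambda>_. []"]) auto
next
  case (Suc k)
  obtain c where c: "\<forall>j\<in>J. c j \<in> S j" "\<forall>x\<in>X. cnt J c x = m"
    using matching[OF Suc.prems(1,2,3)] Suc.prems(4) by blast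
  define S' where "S' j = S j - {c j}" for j
  have finS: "\<forall>j\<in>J. finite (S j)" using Suc.prems(2,3) finite_subset by blast
  have h1: "\<forall>j\<in>J. S' j \<subseteq> X \<and> card (S' j) = k"
    using Suc.prems(3) c(1) finS unfolding S'_def by auto
  have h2: "\<forall>x\<in>X. card {j\<in>J. x \<in> S' j} = m * k"
  proof
    fix x assume xX: "x \<in> X"
    have "{j\<in>J. x \<in> S' j} = {j\<in>J. x \<in> S j} - {j\<in>J. c j = x}" unfolding S'_def by auto
    moreover have "{j\<in>J. c j = x} \<subseteq> {j\<in>J. x \<in> S j}" using c(1) by auto
    ultimately have "card {j\<in>J. x \<in> S' j} = card {j\<in>J. x \<in> S j} - card {j\<in>J. c j = x}"
      using Suc.prems(1) by (simp add: card_Diff_subset)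
    also have "\<dots> = m * Suc k - m" using c(2) xX Suc.prems(4) unfolding cnt_def by simp
    finally show "card {j\<in>J. x \<in> S' j} = m * k" by simp
  qed
  obtain f where f: "\<forall>j\<in>J. distinct (f j) \<and> set (f j) = S' j \<and> length (f j) = k"
    "\<forall>x\<in>X. \<forall>i<k. card {j\<in>J. f j ! i = x} = m"
    using Suc.IH[OF Suc.prems(1,2) h1 h2] by blast
  define g where "g j = c j # f j" for j
  have "\<forall>j\<in>J. distinct (g j) \<and> set (g j) = S j \<and> length (g j) = Suc k"
    using f(1) c(1) unfolding g_def S'_def by auto
  moreover have "\<forall>x\<in>X. \<forall>i<Suc k. card {j\<in>J. g j ! i = x} = m"
  proof (intro ballI allI impI)
    fix x i assume xX: "x \<in> X" and i: "i < Suc k"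
    show "card {j\<in>J. g j ! i = x} = m"
    proof (cases i)
      case 0
      then show ?thesis using c(2) xX unfolding g_def cnt_def by simp
    next
      case (Suc i')
      then show ?thesis using f(2) xX i unfolding g_def by simp
    qed
  qed
  ultimately show ?case by blast
qed

lemma subsets_containing:
  assumes "finite B" "x \<in> B" "1 \<le> t"
  shows "card {T. T \<subseteq> B \<and> x \<in> T \<and> card T = t} = (card B - 1) choose (t - 1)"
proof -
  have eq: "{T. T \<subseteq> B \<and> x \<in> T \<and> card T = t} = insert x ` {U. U \<subseteq> B - {x} \<and> card U = t - 1}"
  proof
    show "{T. T \<subseteq> B \<and> x \<in> T \<and> card T = t} \<subseteq> insert x ` {U. U \<subseteq> B - {x} \<and> card U = t - 1}"
    proof
      fix T assume T: "T \<in> {T. T \<subseteq> B \<and> x \<in> T \<and> card T = t}"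
      then have "finite T" using assms(1) finite_subset by blast
      then have "T - {x} \<in> {U. U \<subseteq> B - {x} \<and> card U = t - 1}" using T by auto
      moreover have "T = insert x (T - {x})" using T by auto
      ultimately show "T \<in> insert x ` {U. U \<subseteq> B - {x} \<and> card U = t - 1}" by blast
    qed
  next
    show "insert x ` {U. U \<subseteq> B - {x} \<and> card U = t - 1} \<subseteq> {T. T \<subseteq> B \<and> x \<in> T \<and> card T = t}"
    proof
      fix T assume "T \<in> insert x ` {U. U \<subseteq> B - {x} \<and> card U = t - 1}"
      then obtain U where U: "U \<subseteq> B - {x}" "card U = t - 1" "T = insert x U" by blast
      have "finite U" using U(1) assms(1) finite_subset by blast
      moreover have "x \<notin> U" using U(1) by blast
      ultimately have "card T = t" using U assms(3) by simp
      then show "T \<in> {T. T \<subseteq> B \<and> x \<in> T \<and> card T = t}" using U assms(2) by auto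
    qed
  qed
  have inj: "inj_on (insert x) {U. U \<subseteq> B - {x} \<and> card U = t - 1}"
    by (rule inj_onI) (metis (no_types, lifting) Diff_insert_absorb insert_Diff_single mem_Collect_eq subset_Diff_insert)
  have "card {T. T \<subseteq> B \<and> x \<in> T \<and> card T = t} = card {U. U \<subseteq> B - {x} \<and> card U = t - 1}"
    unfolding eq by (rule card_image[OF inj])
  also have "\<dots> = card (B - {x}) choose (t - 1)" using n_subsets assms(1) by blast
  finally show ?thesis using assms by simp
qed

lemma design_rep:
  assumes D: "t_design X \<B> t v k lam" and xX: "x \<in> X"
  shows "card {B\<in>\<B>. x \<in> B} * ((k - 1) choose (t - 1)) = lam * ((v - 1) choose (t - 1))"
proof -
  note d = D[unfolded t_design_def]
  have finX: "finite X" using d by blast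
  have finB: "finite \<B>" using d finX by (meson Pow_iff finite_Pow_iff finite_subset subsetI)
  define Tx where "Tx = {T. T \<subseteq> X \<and> x \<in> T \<and> card T = t}"
  define Bx where "Bx = {B\<in>\<B>. x \<in> B}"
  have finTx: "finite Tx" unfolding Tx_def using finX by (simp add: finite_subset)
  have finBx: "finite Bx" unfolding Bx_def using finB by simp
  have "(\<Sum>B\<in>Bx. card {T\<in>Tx. T \<subseteq> B}) = (\<Sum>T\<in>Tx. card {B\<in>Bx. T \<subseteq> B})"
    by (rule swap_count[OF finBx finTx])
  moreover have "(\<Sum>B\<in>Bx. card {T\<in>Tx. T \<subseteq> B}) = (\<Sum>B\<in>Bx. (k - 1) choose (t - 1))"
  proof (rule sum.cong)
    fix B assume B: "B \<in> Bx"
    then have BX: "B \<subseteq> X" "card B = k" "x \<in> B" using d unfolding Bx_def by auto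
    have fB: "finite B" using BX finX finite_subset by blast
    have "{T\<in>Tx. T \<subseteq> B} = {T. T \<subseteq> B \<and> x \<in> T \<and> card T = t}" unfolding Tx_def using BX by auto
    then show "card {T\<in>Tx. T \<subseteq> B} = (k - 1) choose (t - 1)"
      using subsets_containing[OF fB BX(3)] d BX by simp
  qed simp
  moreover have "(\<Sum>T\<in>Tx. card {B\<in>Bx. T \<subseteq> B}) = (\<Sum>T\<in>Tx. lam)"
  proof (rule sum.cong)
    fix T assume T: "T \<in> Tx"
    have "{B\<in>Bx. T \<subseteq> B} = {B\<in>\<B>. T \<subseteq> B}" unfolding Bx_def using T unfolding Tx_def by auto
    then show "card {B\<in>Bx. T \<subseteq> B} = lam" using d T unfolding Tx_def by auto
  qed simp
  moreover have "card Tx = (v - 1) choose (t - 1)"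
    unfolding Tx_def using subsets_containing[OF finX xX] d by simp
  ultimately show ?thesis unfolding Bx_def by (simp add: mult.commute)
qed

theorem mainTheorem4:
  fixes X :: "'a set" and \<B> :: "'a set set" and t v k lam :: nat
  assumes "t_design X \<B> t v k lam"
  shows "(\<exists>ord. balanced_ordering X \<B> k ord) \<longleftrightarrow> v dvd card \<B>"
proof -
  note d = assms[unfolded t_design_def]
  have finX: "finite X" using d by blast
  have finB: "finite \<B>" using d finX by (meson Pow_iff finite_Pow_iff finite_subset subsetI)
  have vpos: "v > 0" using d by auto
  have kpos: "k > 0" using d by auto
  have Xne: "X \<noteq> {}" using d vpos by auto
  show ?thesis
  proof
    assume "\<exists>ord. balanced_ordering X \<B> k ord"
    then obtain ord where o: "balanced_ordering X \<B> k ord" by blast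
    obtain x where "x \<in> X" using Xne by blast
    then have "real (card {B\<in>\<B>. ord B ! 0 = x}) = real (card \<B>) / real (card X)"
      using o kpos unfolding balanced_ordering_def by blast
    then have "real (card \<B>) = real (card {B\<in>\<B>. ord B ! 0 = x}) * real v"
      using d vpos by (simp add: field_simps)
    then have "card \<B> = card {B\<in>\<B>. ord B ! 0 = x} * v" by (metis of_nat_eq_iff of_nat_mult)
    then show "v dvd card \<B>" by simp
  next
    assume "v dvd card \<B>"
    then obtain m where bm: "card \<B> = v * m" by blast
    define C where "C = (k - 1) choose (t - 1)"
    have Cpos: "C > 0" unfolding C_def using d by (simp add: diff_le_mono)
    define r where "r = card {B\<in>\<B>. (SOME x. x \<in> X) \<in> B}"
    have reg: "\<forall>x\<in>X. card {B\<in>\<B>. x \<in> B} = r"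
    proof
      fix x assume xX: "x \<in> X"
      have sx: "(SOME x. x \<in> X) \<in> X" using Xne by (simp add: some_in_eq)
      have "card {B\<in>\<B>. x \<in> B} * C = r * C"
        unfolding r_def C_def using design_rep[OF assms xX] design_rep[OF assms sx] by simp
      then show "card {B\<in>\<B>. x \<in> B} = r" using Cpos by simp
    qed
    have "card \<B> * k = (\<Sum>B\<in>\<B>. card {y\<in>X. y \<in> B})"
    proof -
      have "\<forall>B\<in>\<B>. {y\<in>X. y \<in> B} = B" using d by blast
      then have "(\<Sum>B\<in>\<B>. card {y\<in>X. y \<in> B}) = (\<Sum>B\<in>\<B>. k)" using d by simp
      then show ?thesis by simp
    qed
    also have "\<dots> = (\<Sum>y\<in>X. card {B\<in>\<B>. y \<in> B})" using swap_count[OF finB finX] by simp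
    also have "\<dots> = v * r" using reg d by simp
    finally have "v * m * k = v * r" using bm by simp
    then have rmk: "r = m * k" using vpos by simp
    have "\<forall>x\<in>X. card {j\<in>\<B>. x \<in> id j} = m * k" using reg rmk by simp
    moreover have "\<forall>j\<in>\<B>. id j \<subseteq> X \<and> card (id j) = k" using d by simp
    ultimately obtain f where f: "\<forall>j\<in>\<B>. distinct (f j) \<and> set (f j) = id j \<and> length (f j) = k"
       "\<forall>x\<in>X. \<forall>i<k. card {j\<in>\<B>. f j ! i = x} = m"
      using order_ex[OF finB finX] by blast
    have "balanced_ordering X \<B> k f"
      unfolding balanced_ordering_def
    proof (intro conjI ballI allI impI)
      fix B assume "B \<in> \<B>"
      then show "distinct (f B)" "set (f B) = B" "length (f B) = k" using f(1) by auto
    next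
      fix x i assume "x \<in> X" "i < k"
      then have "card {B\<in>\<B>. f B ! i = x} = m" using f(2) by blast
      then show "real (card {B\<in>\<B>. f B ! i = x}) = real (card \<B>) / real (card X)"
        using bm d vpos by simp
    qed
    then show "\<exists>ord. balanced_ordering X \<B> k ord" by blast
  qed
qed

end
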